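(* Let $T$ be a decision tree of depth $d$ computing a Boolean function $f:\{-1,1\}^n\to\{0,1\}$, and let $p=\Pr_x[f(x)=1]$ for uniform $x\in\{-1,1\}^n$. Then $$\sum_{i=1}^n|\hat f(\{i\})|\ \le\ O\big(\sqrt d\cdot p\cdot\sqrt{\ln(e/p)}\big),$$ where $O(\cdot)$ hides a universal constant.
   Context: Fourier coefficients: $\hat f(S)=\mathbb E_{x}[f(x)\prod_{i\in S}x_i]$ for $x$ uniform on $\{-1,1\}^n$. *)

theory Defs
  imports Complex_Main
begin

text \<open>Points of the Boolean cube {-1,1}^n are represented as bool lists of length n;
  coordinate i (0-based) is +1 if the entry is True and -1 otherwise.\<close>

definition cube :: "nat \<Rightarrow> bool list set" where
  "cube n = {xs. length xs = n}"

definition chi :: "bool list \<Rightarrow> nat \<Rightarrow> real" where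
  "chi xs i = (if xs ! i then 1 else -1)"

definition fourier :: "nat \<Rightarrow> (bool list \<Rightarrow> real) \<Rightarrow> nat set \<Rightarrow> real" where
  "fourier n f S = (\<Sum>x\<in>cube n. f x * (\<Prod>i\<in>S. chi x i)) / 2 ^ n"

datatype dtree = Leaf bool | Node nat dtree dtree

fun dt_eval :: "dtree \<Rightarrow> bool list \<Rightarrow> bool" where
  "dt_eval (Leaf b) x = b"
| "dt_eval (Node i l r) x = (if x ! i then dt_eval r x else dt_eval l x)"

fun dt_depth :: "dtree \<Rightarrow> nat" where
  "dt_depth (Leaf b) = 0"
| "dt_depth (Node i l r) = Suc (max (dt_depth l) (dt_depth r))"

fun dt_vars_below :: "dtree \<Rightarrow> nat \<Rightarrow> bool" where
  "dt_vars_below (Leaf b) n = True"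
| "dt_vars_below (Node i l r) n = (i < n \<and> dt_vars_below l n \<and> dt_vars_below r n)"

definition dt_fun :: "dtree \<Rightarrow> bool list \<Rightarrow> real" where
  "dt_fun T x = of_bool (dt_eval T x)"

definition dt_prob :: "nat \<Rightarrow> dtree \<Rightarrow> real" where
  "dt_prob n T = real (card {x\<in>cube n. dt_eval T x}) / 2 ^ n"

end

theory Submission
  imports Defs
begin

lemma fact_double: "(2::real) ^ k * fact k \<le> fact (2*k)"
proof (induction k)
  case 0 then show ?case by simp
next
  case (Suc k)
  have "fact (2 * Suc k) = (real (2*k+2) * real (2*k+1)) * (fact (2*k) :: real)"
    by (simp add: fact_Suc algebra_simps)
  moreover have "(2::real) ^ Suc k * fact (Suc k) = (2 * real (k+1)) * (2 ^ k * fact k)"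
    by (simp add: fact_Suc algebra_simps)
  moreover have "2 * real (k+1) \<le> real (2*k+2) * real (2*k+1)" by simp
  ultimately show ?case using Suc
    by (metis mult_mono fact_ge_zero mult_nonneg_nonneg of_nat_0_le_iff zero_le_numeral zero_le_power)
qed

lemma cosh_le: "cosh (x::real) \<le> exp (x^2/2)"
proof -
  have e: "(\<lambda>n. if even n then (x^2/2) ^ (n div 2) /\<^sub>R fact (n div 2) else 0) sums exp (x^2/2)"
    using sums_if[OF sums_zero exp_converges[of "x^2/2"]] by simp
  show ?thesis
  proof (rule sums_le[OF _ cosh_converges e])
    fix n
    show "(if even n then x ^ n /\<^sub>R fact n else 0) \<le> (if even n then (x^2/2) ^ (n div 2) /\<^sub>R fact (n div 2) else 0)"
    proof (cases "even n")
      case True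
      then obtain k where n: "n = 2*k" by blast
      have xx: "x ^ n = (x^2)^k" unfolding n by (simp add: power_mult)
      have "x ^ n / fact n \<le> x^n / (2^k * fact k)"
        using fact_double[of k] unfolding xx n
        by (intro divide_left_mono) (auto simp: zero_le_power2 intro!: mult_pos_pos)
      also have "\<dots> = (x^2/2)^k / fact k" unfolding xx by (simp add: power_divide)
      finally have "x ^ n / fact n \<le> (x^2/2)^k / fact k" .
      then show ?thesis using True n by (simp add: real_scaleR_def divide_inverse_commute[symmetric] del: scaleR_conv_of_real)
    qed simp
  qed
qed

fun pvars :: "dtree \<Rightarrow> bool list \<Rightarrow> nat set" where
  "pvars (Leaf b) x = {}"
| "pvars (Node i l r) x = insert i (if x ! i then pvars r x else pvars l x)"

definition flip :: "nat \<Rightarrow> bool list \<Rightarrow> bool list" where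
  "flip i x = x[i := \<not> x ! i]"

lemma finite_pvars[simp]: "finite (pvars T x)"
  by (induction T) auto

lemma pvars_below: "dt_vars_below T n \<Longrightarrow> pvars T x \<subseteq> {..<n}"
  by (induction T) auto

lemma flip_inv:
  assumes "i \<notin> pvars T x"
  shows "pvars T (flip i x) = pvars T x \<and> dt_eval T (flip i x) = dt_eval T x"
  using assms
proof (induction T)
  case (Leaf b) then show ?case by simp
next
  case (Node j l r)
  then have "j \<noteq> i" by auto
  then have "flip i x ! j = x ! j" unfolding flip_def by simp
  with Node show ?case by auto
qed

lemma flip_flip: "i < length x \<Longrightarrow> flip i (flip i x) = x"
  unfolding flip_def by simp

lemma length_flip[simp]: "length (flip i x) = length x"
  unfolding flip_def by simp

lemma chi_flip: "i < length x \<Longrightarrow> chi (flip i x) i = - chi x i"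
  unfolding flip_def chi_def by simp

lemma finite_cube[simp]: "finite (cube n)"
proof -
  have "cube n = {xs. set xs \<subseteq> UNIV \<and> length xs = n}" unfolding cube_def by simp
  then show ?thesis using finite_lists_length_eq[of "UNIV :: bool set" n] by simp
qed

lemma card_cube: "card (cube n) = 2 ^ n"
proof -
  have "cube n = {xs. set xs \<subseteq> UNIV \<and> length xs = n}" unfolding cube_def by simp
  then show ?thesis using card_lists_length_eq[of "UNIV :: bool set" n] by (simp add: card_UNIV_bool)
qed

definition sub :: "nat \<Rightarrow> nat set \<Rightarrow> (nat \<Rightarrow> bool) \<Rightarrow> bool list set" where
  "sub n D a = {x \<in> cube n. \<forall>j\<in>D. x ! j = a j}"

lemma finite_sub[simp]: "finite (sub n D a)"
  unfolding sub_def by simp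

lemma sub_split:
  assumes "i \<notin> D" "i < n"
  shows "sub n D a = sub n (insert i D) (a(i:=True)) \<union> sub n (insert i D) (a(i:=False))"
    and "sub n (insert i D) (a(i:=True)) \<inter> sub n (insert i D) (a(i:=False)) = {}"
    and "card (sub n (insert i D) (a(i:=True))) = card (sub n (insert i D) (a(i:=False)))"
proof -
  have mem: "x \<in> sub n (insert i D) (a(i:=b)) \<longleftrightarrow> x \<in> sub n D a \<and> x ! i = b" for x b
  proof -
    have "(\<forall>j\<in>insert i D. x ! j = (a(i:=b)) j) \<longleftrightarrow> (\<forall>j\<in>D. x ! j = a j) \<and> x ! i = b"
      using assms(1) by (metis fun_upd_other fun_upd_same insert_iff)
    then show ?thesis unfolding sub_def by blast
  qed
  show "sub n D a = sub n (insert i D) (a(i:=True)) \<union> sub n (insert i D) (a(i:=False))"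
  proof (rule set_eqI)
    fix x show "x \<in> sub n D a \<longleftrightarrow> x \<in> sub n (insert i D) (a(i:=True)) \<union> sub n (insert i D) (a(i:=False))"
      using mem[of x True] mem[of x False] by auto
  qed
  show "sub n (insert i D) (a(i:=True)) \<inter> sub n (insert i D) (a(i:=False)) = {}"
  proof (rule set_eqI)
    fix x show "x \<in> sub n (insert i D) (a(i:=True)) \<inter> sub n (insert i D) (a(i:=False)) \<longleftrightarrow> x \<in> {}"
      using mem[of x True] mem[of x False] by auto
  qed
  have fl: "flip i x \<in> sub n D a \<and> flip i x ! i = (\<not> x ! i)" if "x \<in> sub n D a" for x
  proof -
    have "length x = n" using that unfolding sub_def cube_def by simp
    moreover have "\<forall>j\<in>D. flip i x ! j = x ! j"
    proof
      fix j assume "j \<in> D" then have "j \<noteq> i" using assms(1) by auto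
      then show "flip i x ! j = x ! j" unfolding flip_def by simp
    qed
    ultimately show ?thesis using that assms(2) unfolding sub_def cube_def flip_def by auto
  qed
  have ff: "flip i (flip i x) = x" if "x \<in> sub n D a" for x
    using that assms(2) unfolding sub_def cube_def by (simp add: flip_flip)
  have "bij_betw (flip i) (sub n (insert i D) (a(i:=True))) (sub n (insert i D) (a(i:=False)))"
  proof (rule bij_betw_byWitness[where f'="flip i"])
    show "\<forall>x\<in>sub n (insert i D) (a(i := True)). flip i (flip i x) = x"
      using mem ff by blast
    show "\<forall>x\<in>sub n (insert i D) (a(i := False)). flip i (flip i x) = x"
      using mem ff by blast
    show "flip i ` sub n (insert i D) (a(i := True)) \<subseteq> sub n (insert i D) (a(i := False))"
      using mem fl by auto
    show "flip i ` sub n (insert i D) (a(i := False)) \<subseteq> sub n (insert i D) (a(i := True))"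
      using mem fl by auto
  qed
  then show "card (sub n (insert i D) (a(i:=True))) = card (sub n (insert i D) (a(i:=False)))"
    by (rule bij_betw_same_card)
qed

lemma chi_sub: "x \<in> sub n D a \<Longrightarrow> j \<in> D \<Longrightarrow> chi x j = (if a j then 1 else -1)"
  unfolding sub_def chi_def by auto


lemma sum_insert_c:
  assumes "i \<notin> D" "finite D"
  shows "(\<Sum>j\<in>insert i D. s j * (if (a(i:=b)) j then 1 else -1 :: real))
       = s i * (if b then 1 else -1) + (\<Sum>j\<in>D. s j * (if a j then 1 else -1))"
proof -
  have "(\<Sum>j\<in>D. s j * (if (a(i:=b)) j then 1 else -1 :: real)) = (\<Sum>j\<in>D. s j * (if a j then 1 else -1))"
    using assms(1) by (intro sum.cong) auto
  then show ?thesis using assms by (simp add: sum.insert)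
qed

lemma exp_bound:
  fixes t :: real
  assumes "dt_vars_below T n" "D \<subseteq> {..<n}" "\<forall>i. s i = 1 \<or> s i = -1" "t \<ge> 0"
  shows "(\<Sum>x\<in>sub n D a. exp (t * (\<Sum>i\<in>pvars T x \<union> D. s i * chi x i)))
     \<le> card (sub n D a) * exp (t * (\<Sum>i\<in>D. s i * (if a i then 1 else -1))) * cosh t ^ dt_depth T"
  using assms(1,2)
proof (induction T arbitrary: D a)
  case (Leaf b)
  have "(\<Sum>x\<in>sub n D a. exp (t * (\<Sum>i\<in>pvars (Leaf b) x \<union> D. s i * chi x i)))
      = (\<Sum>x\<in>sub n D a. exp (t * (\<Sum>i\<in>D. s i * (if a i then 1 else -1))))"
    by (intro sum.cong refl) (auto intro!: sum.cong simp: chi_sub)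
  then show ?case by simp
next
  case (Node i L R)
  have fD: "finite D" using Node.prems(2) finite_subset by blast
  have iN: "i < n" and vL: "dt_vars_below L n" and vR: "dt_vars_below R n" using Node.prems by auto
  have ch1: "cosh t \<ge> 1" by (rule cosh_real_ge_1)
  define c where "c = (\<Sum>i\<in>D. s i * (if a i then 1 else -1 :: real))"
  show ?case
  proof (cases "i \<in> D")
    case True
    define S where "S = (if a i then R else L)"
    have vS: "dt_vars_below S n" using vL vR S_def by auto
    have dS: "dt_depth S \<le> dt_depth (Node i L R)" unfolding S_def by auto
    have "(\<Sum>x\<in>sub n D a. exp (t * (\<Sum>i\<in>pvars (Node i L R) x \<union> D. s i * chi x i)))
        = (\<Sum>x\<in>sub n D a. exp (t * (\<Sum>i\<in>pvars S x \<union> D. s i * chi x i)))"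
    proof (intro sum.cong refl)
      fix x assume "x \<in> sub n D a"
      then have "x ! i = a i" using True unfolding sub_def by auto
      then have "pvars (Node i L R) x \<union> D = pvars S x \<union> D" using True unfolding S_def by auto
      then show "exp (t * (\<Sum>i\<in>pvars (Node i L R) x \<union> D. s i * chi x i)) = exp (t * (\<Sum>i\<in>pvars S x \<union> D. s i * chi x i))"
        by simp
    qed
    also have "\<dots> \<le> card (sub n D a) * exp (t * c) * cosh t ^ dt_depth S"
      unfolding c_def using Node.IH vS Node.prems(2) unfolding S_def by (auto split: if_splits)
    also have "\<dots> \<le> card (sub n D a) * exp (t * c) * cosh t ^ dt_depth (Node i L R)"
      by (intro mult_left_mono power_increasing dS ch1) auto
    finally show ?thesis unfolding c_def .
  next
    case False
    define ST where "ST = sub n (insert i D) (a(i:=True))"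
    define SF where "SF = sub n (insert i D) (a(i:=False))"
    note sp = sub_split[OF False iN, of a, folded ST_def SF_def]
    have D': "insert i D \<subseteq> {..<n}" using iN Node.prems(2) by auto
    define m where "m = max (dt_depth L) (dt_depth R)"
    have eqT: "pvars (Node i L R) x \<union> D = pvars R x \<union> insert i D" if "x \<in> ST" for x
      using that unfolding ST_def sub_def by auto
    have eqF: "pvars (Node i L R) x \<union> D = pvars L x \<union> insert i D" if "x \<in> SF" for x
      using that unfolding SF_def sub_def by auto
    have cT: "(\<Sum>j\<in>insert i D. s j * (if (a(i:=True)) j then 1 else -1 :: real)) = s i + c"
      using sum_insert_c[OF False fD, of s a True] unfolding c_def by simp
    have cF: "(\<Sum>j\<in>insert i D. s j * (if (a(i:=False)) j then 1 else -1 :: real)) = - s i + c"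
      using sum_insert_c[OF False fD, of s a False] unfolding c_def by simp
    have bT: "(\<Sum>x\<in>ST. exp (t * (\<Sum>i\<in>pvars (Node i L R) x \<union> D. s i * chi x i)))
        \<le> card ST * exp (t * (s i + c)) * cosh t ^ m"
    proof -
      have "(\<Sum>x\<in>ST. exp (t * (\<Sum>i\<in>pvars (Node i L R) x \<union> D. s i * chi x i)))
          = (\<Sum>x\<in>ST. exp (t * (\<Sum>i\<in>pvars R x \<union> insert i D. s i * chi x i)))"
        using eqT by (intro sum.cong) auto
      also have "\<dots> \<le> card ST * exp (t * (s i + c)) * cosh t ^ dt_depth R"
      proof -
        have ih: "(\<Sum>x\<in>ST. exp (t * (\<Sum>i\<in>pvars R x \<union> insert i D. s i * chi x i)))
          \<le> card ST * exp (t * (\<Sum>j\<in>insert i D. s j * (if (a(i:=True)) j then 1 else -1))) * cosh t ^ dt_depth R"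
          unfolding ST_def by (rule Node.IH(2)[OF vR D'])
        then show ?thesis unfolding cT .
      qed
      also have "\<dots> \<le> card ST * exp (t * (s i + c)) * cosh t ^ m"
        by (intro mult_left_mono power_increasing ch1) (auto simp: m_def)
      finally show ?thesis .
    qed
    have bF: "(\<Sum>x\<in>SF. exp (t * (\<Sum>i\<in>pvars (Node i L R) x \<union> D. s i * chi x i)))
        \<le> card SF * exp (t * (- s i + c)) * cosh t ^ m"
    proof -
      have "(\<Sum>x\<in>SF. exp (t * (\<Sum>i\<in>pvars (Node i L R) x \<union> D. s i * chi x i)))
          = (\<Sum>x\<in>SF. exp (t * (\<Sum>i\<in>pvars L x \<union> insert i D. s i * chi x i)))"
        using eqF by (intro sum.cong) auto
      also have "\<dots> \<le> card SF * exp (t * (- s i + c)) * cosh t ^ dt_depth L"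
      proof -
        have ih: "(\<Sum>x\<in>SF. exp (t * (\<Sum>i\<in>pvars L x \<union> insert i D. s i * chi x i)))
          \<le> card SF * exp (t * (\<Sum>j\<in>insert i D. s j * (if (a(i:=False)) j then 1 else -1))) * cosh t ^ dt_depth L"
          unfolding SF_def by (rule Node.IH(1)[OF vL D'])
        then show ?thesis unfolding cF .
      qed
      also have "\<dots> \<le> card SF * exp (t * (- s i + c)) * cosh t ^ m"
        by (intro mult_left_mono power_increasing ch1) (auto simp: m_def)
      finally show ?thesis .
    qed
    have cardS: "card (sub n D a) = card ST + card SF"
      using sp(1,2) by (simp add: card_Un_disjoint ST_def SF_def)
    have ce: "exp (t * s i) + exp (- (t * s i)) = 2 * cosh t"
      using assms(3)[rule_format, of i] by (auto simp: cosh_def)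
    have "(\<Sum>x\<in>sub n D a. exp (t * (\<Sum>i\<in>pvars (Node i L R) x \<union> D. s i * chi x i)))
       = (\<Sum>x\<in>ST. exp (t * (\<Sum>i\<in>pvars (Node i L R) x \<union> D. s i * chi x i)))
        + (\<Sum>x\<in>SF. exp (t * (\<Sum>i\<in>pvars (Node i L R) x \<union> D. s i * chi x i)))"
      using sp(1,2) by (simp add: sum.union_disjoint ST_def SF_def)
    also have "\<dots> \<le> card ST * exp (t * (s i + c)) * cosh t ^ m + card SF * exp (t * (- s i + c)) * cosh t ^ m"
      using bT bF by linarith
    also have "\<dots> = card ST * exp (t * c) * cosh t ^ m * (exp (t * s i) + exp (- (t * s i)))"
      using sp(3) by (simp add: algebra_simps exp_add[symmetric])
    also have "\<dots> = card (sub n D a) * exp (t * c) * cosh t ^ dt_depth (Node i L R)"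
      unfolding ce cardS using sp(3) by (simp add: m_def algebra_simps)
    finally show ?thesis unfolding c_def .
  qed
qed


lemma fenchel:
  fixes M :: "'a \<Rightarrow> real"
  assumes "finite U" "A \<subseteq> U" "A \<noteq> {}" "(\<Sum>x\<in>U. exp (M x)) \<le> K"
  shows "(\<Sum>x\<in>A. M x) \<le> card A * ln (K / card A)"
proof -
  have fA: "finite A" using assms(1,2) finite_subset by blast
  have cA: "real (card A) > 0" using fA assms(3) by (simp add: card_gt_0_iff)
  have "(\<Sum>x\<in>A. exp (M x)) \<le> (\<Sum>x\<in>U. exp (M x))"
    by (rule sum_mono2[OF assms(1,2)]) auto
  also have "\<dots> \<le> K" by fact
  finally have sAK: "(\<Sum>x\<in>A. exp (M x)) \<le> K" .
  have "(\<Sum>x\<in>A. exp (M x)) > 0" using fA assms(3) by (intro sum_pos) auto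
  then have Kpos: "K > 0" using sAK by linarith
  define c where "c = ln (K / card A)"
  have ec: "exp (- c) = card A / K" unfolding c_def using Kpos cA
    by (simp add: exp_minus)
  have "(\<Sum>x\<in>A. M x - c) \<le> (\<Sum>x\<in>A. exp (M x) * exp (- c) - 1)"
  proof (rule sum_mono)
    fix x
    have "1 + (M x - c) \<le> exp (M x - c)" by (rule exp_ge_add_one_self)
    then show "M x - c \<le> exp (M x) * exp (- c) - 1" by (simp add: exp_diff exp_minus divide_inverse)
  qed
  also have "\<dots> = exp (- c) * (\<Sum>x\<in>A. exp (M x)) - card A"
    by (simp add: sum_subtractf sum_distrib_left mult.commute)
  also have "\<dots> \<le> exp (- c) * K - card A"
    using sAK by (intro diff_right_mono mult_left_mono) auto
  also have "\<dots> = 0" unfolding ec using Kpos by simp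
  finally have "(\<Sum>x\<in>A. M x) - card A * c \<le> 0" by (simp add: sum_subtractf)
  then show ?thesis unfolding c_def by simp
qed

lemma flip_sum_zero:
  assumes "i < n"
  shows "(\<Sum>x\<in>{x\<in>cube n. dt_eval T x \<and> i \<notin> pvars T x}. chi x i) = 0"
proof -
  define B where "B = {x\<in>cube n. dt_eval T x \<and> i \<notin> pvars T x}"
  have mB: "flip i x \<in> B" if "x \<in> B" for x
    using that flip_inv[of i T x] unfolding B_def cube_def by auto
  have ffB: "flip i (flip i x) = x" if "x \<in> B" for x
    using that assms unfolding B_def cube_def by (simp add: flip_flip)
  have "(\<Sum>x\<in>B. chi (flip i x) i) = (\<Sum>x\<in>B. chi x i)"
    by (rule sum.reindex_bij_witness[of B "flip i" "flip i"]) (auto simp: mB ffB)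
  moreover have "(\<Sum>x\<in>B. chi (flip i x) i) = - (\<Sum>x\<in>B. chi x i)"
    using assms unfolding B_def cube_def by (simp add: chi_flip sum_negf)
  ultimately show ?thesis unfolding B_def by linarith
qed


lemma fourier_single:
  "fourier n (dt_fun T) {i} = (\<Sum>x\<in>{x\<in>cube n. dt_eval T x}. chi x i) / 2 ^ n"
proof -
  have "(\<Sum>x\<in>cube n. dt_fun T x * (\<Prod>j\<in>{i}. chi x j)) = (\<Sum>x\<in>cube n. if dt_eval T x then chi x i else 0)"
    by (intro sum.cong) (auto simp: dt_fun_def)
  also have "\<dots> = (\<Sum>x\<in>{x\<in>cube n. dt_eval T x}. chi x i)"
    by (simp add: sum.inter_filter)
  finally show ?thesis unfolding fourier_def by simp
qed

lemma level1_identity: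
  assumes "dt_vars_below T n"
  defines "s \<equiv> (\<lambda>i. if fourier n (dt_fun T) {i} \<ge> 0 then 1 else -1 :: real)"
  shows "(\<Sum>i<n. \<bar>fourier n (dt_fun T) {i}\<bar>)
       = (\<Sum>x\<in>{x\<in>cube n. dt_eval T x}. (\<Sum>i\<in>pvars T x. s i * chi x i)) / 2 ^ n"
proof -
  define A where "A = {x\<in>cube n. dt_eval T x}"
  have fA: "finite A" unfolding A_def by simp
  have "(\<Sum>i<n. \<bar>fourier n (dt_fun T) {i}\<bar>) = (\<Sum>i<n. s i * fourier n (dt_fun T) {i})"
    unfolding s_def by (intro sum.cong) auto
  also have "\<dots> = (\<Sum>i<n. (\<Sum>x\<in>A. s i * chi x i)) / 2 ^ n"
    unfolding fourier_single A_def by (simp add: sum_divide_distrib sum_distrib_left)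
  also have "(\<Sum>i<n. (\<Sum>x\<in>A. s i * chi x i)) = (\<Sum>x\<in>A. (\<Sum>i<n. s i * chi x i))"
    by (rule sum.swap)
  also have "\<dots> = (\<Sum>x\<in>A. (\<Sum>i\<in>pvars T x. s i * chi x i))
                 + (\<Sum>x\<in>A. (\<Sum>i<n. if i \<notin> pvars T x then s i * chi x i else 0))"
  proof -
    have "(\<Sum>i<n. s i * chi x i) = (\<Sum>i\<in>pvars T x. s i * chi x i)
                 + (\<Sum>i<n. if i \<notin> pvars T x then s i * chi x i else 0)" for x
    proof -
      have "(\<Sum>i<n. s i * chi x i) = (\<Sum>i<n. (if i \<in> pvars T x then s i * chi x i else 0)
                 + (if i \<notin> pvars T x then s i * chi x i else 0))"
        by (intro sum.cong) auto
      also have "\<dots> = (\<Sum>i<n. if i \<in> pvars T x then s i * chi x i else 0)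
                 + (\<Sum>i<n. if i \<notin> pvars T x then s i * chi x i else 0)"
        by (rule sum.distrib)
      also have "(\<Sum>i<n. if i \<in> pvars T x then s i * chi x i else 0) = (\<Sum>i\<in>{i\<in>{..<n}. i \<in> pvars T x}. s i * chi x i)"
        by (subst sum.inter_filter) auto
      also have "{i\<in>{..<n}. i \<in> pvars T x} = pvars T x" using pvars_below[OF assms(1), of x] by auto
      finally show ?thesis .
    qed
    then show ?thesis by (simp add: sum.distrib)
  qed
  also have "(\<Sum>x\<in>A. (\<Sum>i<n. if i \<notin> pvars T x then s i * chi x i else 0)) = 0"
  proof -
    have "(\<Sum>x\<in>A. (\<Sum>i<n. if i \<notin> pvars T x then s i * chi x i else 0))
        = (\<Sum>i<n. (\<Sum>x\<in>A. if i \<notin> pvars T x then s i * chi x i else 0))"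
      by (rule sum.swap)
    also have "\<dots> = (\<Sum>i<n. s i * (\<Sum>x\<in>{x\<in>cube n. dt_eval T x \<and> i \<notin> pvars T x}. chi x i))"
    proof (intro sum.cong refl)
      fix i
      have "(\<Sum>x\<in>A. if i \<notin> pvars T x then s i * chi x i else 0) = (\<Sum>x\<in>{x\<in>A. i \<notin> pvars T x}. s i * chi x i)"
        using fA by (simp add: sum.inter_filter)
      also have "{x\<in>A. i \<notin> pvars T x} = {x\<in>cube n. dt_eval T x \<and> i \<notin> pvars T x}"
        unfolding A_def by auto
      finally show "(\<Sum>x\<in>A. if i \<notin> pvars T x then s i * chi x i else 0) = s i * (\<Sum>x\<in>{x\<in>cube n. dt_eval T x \<and> i \<notin> pvars T x}. chi x i)"
        by (simp add: sum_distrib_left)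
    qed
    also have "\<dots> = 0" by (intro sum.neutral) (auto simp: flip_sum_zero)
    finally show ?thesis .
  qed
  finally show ?thesis unfolding A_def by simp
qed


lemma depth0: "dt_depth T = 0 \<Longrightarrow> pvars T x = {}"
  by (cases T) auto

lemma final_arith:
  fixes p SA d :: real
  assumes p: "0 < p" "p \<le> 1" and d: "d \<ge> 1"
    and key: "\<And>t. t > 0 \<Longrightarrow> t * SA \<le> p * (- ln p + d * t^2 / 2)"
  shows "SA \<le> 2 * sqrt d * p * sqrt (ln (exp 1 / p))"
proof -
  define L where "L = ln (exp 1 / p)"
  have L: "L = 1 - ln p" unfolding L_def using p by (simp add: ln_div)
  have lnp: "ln p \<le> 0" using p by simp
  define u where "u = sqrt d"
  define v where "v = sqrt L"
  have u: "u > 0" "u^2 = d" using d unfolding u_def by auto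
  have v: "v > 0" "v^2 = L" using lnp L unfolding v_def by auto
  define t where "t = v / u"
  have t: "t > 0" using u v unfolding t_def by simp
  have "t * SA \<le> p * (- ln p + d * t^2 / 2)" by (rule key[OF t])
  also have "\<dots> \<le> p * (v^2 + v^2 / 2)"
  proof -
    have "d * t^2 = v^2" unfolding t_def power_divide u(2)[symmetric] using u(1) by simp
    moreover have "- ln p \<le> v^2" using v L by simp
    ultimately show ?thesis using p by (intro mult_left_mono) auto
  qed
  finally have "t * SA \<le> p * (3/2) * v^2" by simp
  then have "SA \<le> p * (3/2) * v^2 / t" using t by (simp add: field_simps)
  also have "p * (3/2) * v^2 / t = (3/2) * u * p * v" unfolding t_def using u v
    by (simp add: field_simps power2_eq_square)
  also have "\<dots> \<le> 2 * u * p * v" using u v p by (intro mult_right_mono) auto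
  finally show ?thesis unfolding u_def v_def L_def .
qed

theorem mainTheorem6:
  "\<exists>C>0. \<forall>(n::nat) (T::dtree) (d::nat).
     dt_vars_below T n \<longrightarrow> dt_depth T = d \<longrightarrow>
     (\<Sum>i<n. \<bar>fourier n (dt_fun T) {i}\<bar>)
       \<le> C * sqrt (real d) * dt_prob n T * sqrt (ln (exp 1 / dt_prob n T))"
proof (intro exI[of _ 2] conjI allI impI)
  fix n T d
  assume vb: "dt_vars_below T n" and dd: "dt_depth T = d"
  define s where "s = (\<lambda>i. if fourier n (dt_fun T) {i} \<ge> 0 then 1 else -1 :: real)"
  define A where "A = {x\<in>cube n. dt_eval T x}"
  define M where "M = (\<lambda>x. \<Sum>i\<in>pvars T x. s i * chi x i)"
  define SA where "SA = (\<Sum>x\<in>A. M x)"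
  define N where "N = (2::real) ^ n"
  have N: "N > 0" unfolding N_def by simp
  have id: "(\<Sum>i<n. \<bar>fourier n (dt_fun T) {i}\<bar>) = SA / N"
    using level1_identity[OF vb] unfolding SA_def M_def A_def s_def N_def by simp
  have fA: "finite A" unfolding A_def by simp
  have Asub: "A \<subseteq> cube n" unfolding A_def by auto
  have cardA: "card A \<le> N" using card_mono[OF finite_cube Asub] card_cube[of n]
    unfolding N_def by (metis of_nat_le_iff of_nat_numeral of_nat_power)
  have prob: "dt_prob n T = card A / N" unfolding dt_prob_def A_def N_def by simp
  show "(\<Sum>i<n. \<bar>fourier n (dt_fun T) {i}\<bar>)
       \<le> 2 * sqrt (real d) * dt_prob n T * sqrt (ln (exp 1 / dt_prob n T))"
  proof (cases "A = {} \<or> d = 0")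
    case True
    have "SA = 0"
    proof (cases "A = {}")
      case True then show ?thesis unfolding SA_def by simp
    next
      case False
      then have "d = 0" using \<open>A = {} \<or> d = 0\<close> by simp
      then show ?thesis unfolding SA_def M_def using dd depth0 by simp
    qed
    moreover have "2 * sqrt (real d) * dt_prob n T = 0"
      using True unfolding prob by auto
    ultimately show ?thesis unfolding id by (metis div_0 mult_zero_left order_refl)
  next
    case False
    then have Ane: "A \<noteq> {}" and d1: "real d \<ge> 1" by auto
    have cpos: "real (card A) > 0" using fA Ane by (simp add: card_gt_0_iff)
    define p where "p = card A / N"
    have p: "0 < p" "p \<le> 1" unfolding p_def using cpos N cardA by auto
    have svalid: "\<forall>i. s i = 1 \<or> s i = -1" unfolding s_def by auto
    have key: "t * (SA / N) \<le> p * (- ln p + real d * t^2 / 2)" if t: "t > 0" for t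
    proof -
      have eb: "(\<Sum>x\<in>cube n. exp (t * M x)) \<le> N * cosh t ^ d"
      proof -
        have sc: "sub n {} a = cube n" for a unfolding sub_def by simp
        from exp_bound[OF vb _ svalid, of "{}" t "\<lambda>_. True"] t
        show ?thesis unfolding sc M_def N_def dd card_cube by simp
      qed
      have "(\<Sum>x\<in>A. t * M x) \<le> card A * ln (N * cosh t ^ d / card A)"
        by (rule fenchel[OF finite_cube Asub Ane]) (use eb in simp)
      also have "ln (N * cosh t ^ d / card A) = - ln p + real d * ln (cosh t)"
        unfolding p_def using N cpos
        by (simp add: ln_div ln_mult ln_realpow)
      also have "\<dots> \<le> - ln p + real d * (t^2 / 2)"
      proof -
        have "ln (cosh t) \<le> ln (exp (t^2/2))" using cosh_le[of t] by (subst ln_le_cancel_iff) auto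
        then show ?thesis by (intro add_left_mono mult_left_mono) auto
      qed
      finally have "t * SA \<le> card A * (- ln p + real d * t^2 / 2)"
        unfolding SA_def using cpos by (simp add: sum_distrib_left mult_left_mono)
      then have "t * SA / N \<le> card A * (- ln p + real d * t^2 / 2) / N"
        using N by (intro divide_right_mono) auto
      then show ?thesis unfolding p_def by (simp add: field_simps)
    qed
    show ?thesis unfolding id prob using final_arith[OF p d1 key, folded p_def] unfolding p_def .
  qed
qed (simp)

end
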